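(* Let $\alpha>0,\lambda>0$ and let $X>0$ a.s. with $\mathbb{E}[X]<\infty$. Then $I^\tau_\gamma(X_\tau)<\infty$ for every $\tau\in(0,1)$. Moreover, if $\mathbb{E}[X]=\alpha/\lambda$, then for every $\tau\in(0,1)$: if $\alpha\ge1$, $I^\tau_\gamma(X_\tau)\le\frac{\alpha\lambda\tau}{(1-\tau)^2}$; if $\alpha\in(0,1)$, $I^\tau_\gamma(X_\tau)\le\big(1+\frac1\alpha\big)\frac{\alpha\lambda\tau}{(1-\tau)^2}$.
   Context: For $\tau\in(0,1)$, the gamma smart path $X_\tau$ is defined as follows: conditionally on $X=x$, let $K$ be Poisson with mean $\lambda\tau x/(1-\tau)$; conditionally on $X=x,K=k$, let $Y=0$ if $k=0$ and let $Y$ be gamma distributed with shape $k$ and rate $\lambda\tau/(1-\tau)$ if $k\ge1$; let $\gamma(\alpha,\lambda)$ be a random variable with density $\frac{\lambda^\alpha}{\Gamma(\alpha)}u^{\alpha-1}e^{-\lambda u}$ independent of $(X,K,Y)$; set $X_\tau=(1-\tau)\gamma(\alpha,\lambda)+\tau Y$ (which has a smooth positive Lebesgue density). For a positive random variable $W$ with differentiable positive density $f_W$ and $\rho_W=(\log f_W)'$, the localized Fisher information is $I^\tau_\gamma(W)=\mathbb{E}\big[W\big(\rho_W(W)-\frac{\alpha-1}{W}+\frac{\lambda}{1-\tau}\big)^2\big]$. *)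

theory Defs
  imports "HOL-Probability.Probability"
begin

definition gamma_dens :: "real \<Rightarrow> real \<Rightarrow> real \<Rightarrow> real" where
  "gamma_dens a l x = (if x > 0 then l powr a / Gamma a * x powr (a - 1) * exp (- l * x) else 0)"

definition gamma_law :: "real \<Rightarrow> real \<Rightarrow> real measure" where
  "gamma_law a l = density lborel (\<lambda>x. ennreal (gamma_dens a l x))"

definition poisson_law :: "real \<Rightarrow> nat measure" where
  "poisson_law m = density (count_space UNIV) (\<lambda>k. ennreal (m ^ k / fact k * exp (- m)))"

text \<open>Conditional law of Y given X = x: K ~ Poisson(lambda tau x/(1-tau));
  Y = 0 if K = 0, Y ~ Gamma(K, lambda tau/(1-tau)) otherwise.\<close>
definition Y_cond_law :: "real \<Rightarrow> real \<Rightarrow> real \<Rightarrow> real measure" where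
  "Y_cond_law lam tau x =
     bind (poisson_law (lam * tau * x / (1 - tau)))
       (\<lambda>k. if k = 0 then return borel 0
            else gamma_law (real k) (lam * tau / (1 - tau)))"

text \<open>Law of the gamma smart path X_tau = (1-tau) gamma(alpha,lambda) + tau Y,
  where mu is the law of X and gamma(alpha,lambda) is independent of (X,K,Y).\<close>
definition smart_path_law :: "real \<Rightarrow> real \<Rightarrow> real measure \<Rightarrow> real \<Rightarrow> real measure" where
  "smart_path_law alpha lam mu tau =
     bind mu (\<lambda>x. bind (Y_cond_law lam tau x)
       (\<lambda>y. distr (gamma_law alpha lam) borel (\<lambda>g. (1 - tau) * g + tau * y)))"

definition is_diff_pos_density :: "real measure \<Rightarrow> (real \<Rightarrow> real) \<Rightarrow> bool" where
  "is_diff_pos_density nu f \<longleftrightarrow>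
     f \<in> borel_measurable borel \<and> (\<forall>w. 0 \<le> f w) \<and>
     nu = density lborel (\<lambda>w. ennreal (f w)) \<and>
     (\<forall>w>0. 0 < f w \<and> f differentiable (at w))"

definition loc_fisher :: "real \<Rightarrow> real \<Rightarrow> real \<Rightarrow> real measure \<Rightarrow> (real \<Rightarrow> real) \<Rightarrow> ennreal" where
  "loc_fisher alpha lam tau nu f =
     (\<integral>\<^sup>+ w. ennreal (w * (deriv f w / f w - (alpha - 1) / w + lam / (1 - tau))\<^sup>2) \<partial>nu)"

end

theory Submission
  imports Defs
begin
lemma gd_nonneg: "a > 0 \<Longrightarrow> l > 0 \<Longrightarrow> 0 \<le> gamma_dens a l x"
  by (auto simp: gamma_dens_def intro!: mult_nonneg_nonneg divide_nonneg_pos Gamma_real_pos)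

lemma gd_meas[measurable]: "gamma_dens a l \<in> borel_measurable borel"
  unfolding gamma_dens_def by measurable

lemma nn_int_powr_exp:
  fixes a b :: real assumes a: "a > 0" and b: "b > 0"
  shows "(\<integral>\<^sup>+x. ennreal (indicator {0<..} x * x powr (a-1) * exp (-b*x)) \<partial>lborel) = ennreal (Gamma a / b powr a)"
proof -
  let ?f = "\<lambda>t::real. ennreal (indicator {0..} t * t powr (a - 1) / exp t)"
  have "ennreal (Gamma a) = (\<integral>\<^sup>+t. ?f t \<partial>lborel)"
    using Gamma_conv_nn_integral_real[OF a] by simp
  also have "\<dots> = ennreal \<bar>b\<bar> * (\<integral>\<^sup>+x. ?f (0 + b * x) \<partial>lborel)"
    by (rule nn_integral_real_affine) (use b in auto)
  also have "(\<integral>\<^sup>+x. ?f (0 + b * x) \<partial>lborel) = (\<integral>\<^sup>+x. ennreal (b powr (a-1)) * ennreal (indicator {0<..} x * x powr (a-1) * exp (-b*x)) \<partial>lborel)"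
  proof (intro nn_integral_cong)
    fix x :: real
    show "?f (0 + b * x) = ennreal (b powr (a-1)) * ennreal (indicator {0<..} x * x powr (a-1) * exp (-b*x))"
      using b by (cases "x > 0"; cases "x = 0")
        (auto simp: indicator_def ennreal_mult'[symmetric] powr_mult exp_minus field_simps zero_le_mult_iff)
  qed
  also have "\<dots> = ennreal (b powr (a-1)) * (\<integral>\<^sup>+x. ennreal (indicator {0<..} x * x powr (a-1) * exp (-b*x)) \<partial>lborel)"
    by (rule nn_integral_cmult) measurable
  finally have eq: "ennreal (Gamma a) = ennreal b * ennreal (b powr (a-1)) * (\<integral>\<^sup>+x. ennreal (indicator {0<..} x * x powr (a-1) * exp (-b*x)) \<partial>lborel)"
    using b by (simp add: mult.assoc)
  have bb: "ennreal b * ennreal (b powr (a-1)) = ennreal (b powr a)"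
    using b by (simp add: ennreal_mult'[symmetric] powr_diff field_simps)
  have pos: "b powr a > 0" using b by simp
  have "ennreal (Gamma a / b powr a) = ennreal (Gamma a) / ennreal (b powr a)"
    using pos Gamma_real_pos[OF a] by (simp add: divide_ennreal)
  also have "\<dots> = (\<integral>\<^sup>+x. ennreal (indicator {0<..} x * x powr (a-1) * exp (-b*x)) \<partial>lborel)"
    unfolding eq bb using pos
    by (subst mult.commute, subst ennreal_mult_divide_eq) auto
  finally show ?thesis by simp
qed

lemma gd_alt: "gamma_dens a b x = (b powr a / Gamma a) * (indicator {0<..} x * x powr (a-1) * exp (-b*x))"
  by (auto simp: gamma_dens_def indicator_def)

lemma nn_int_gd: assumes "a > 0" "b > 0" shows "(\<integral>\<^sup>+x. ennreal (gamma_dens a b x) \<partial>lborel) = 1"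
proof -
  have g: "Gamma a > 0" using assms by (simp add: Gamma_real_pos)
  have "(\<integral>\<^sup>+x. ennreal (gamma_dens a b x) \<partial>lborel) =
     (\<integral>\<^sup>+x. ennreal (b powr a / Gamma a) * ennreal (indicator {0<..} x * x powr (a-1) * exp (-b*x)) \<partial>lborel)"
    unfolding gd_alt using g assms
    by (intro nn_integral_cong) (auto simp: ennreal_mult'[symmetric] indicator_def)
  also have "\<dots> = ennreal (b powr a / Gamma a) * ennreal (Gamma a / b powr a)"
    by (subst nn_integral_cmult) (use nn_int_powr_exp[OF assms] in auto)
  also have "\<dots> = ennreal ((b powr a / Gamma a) * (Gamma a / b powr a))"
    using g assms by (subst ennreal_mult'[symmetric]) auto
  also have "(b powr a / Gamma a) * (Gamma a / b powr a) = 1"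
  proof -
    have "Gamma a \<noteq> 0" using g by (metis less_irrefl)
    have "b powr a \<noteq> 0" using assms by auto
    then show ?thesis using \<open>Gamma a \<noteq> 0\<close> by simp
  qed
  finally show ?thesis by simp
qed

lemma prob_gamma_law: "a > 0 \<Longrightarrow> b > 0 \<Longrightarrow> prob_space (gamma_law a b)"
  unfolding gamma_law_def
  by (rule prob_spaceI) (auto simp: nn_int_gd emeasure_density)

lemma sets_gamma_law[simp, measurable_cong]: "sets (gamma_law a b) = sets borel"
  by (simp add: gamma_law_def)

lemma space_gamma_law[simp]: "space (gamma_law a b) = UNIV"
  by (simp add: gamma_law_def)

lemma gd_scale: assumes "s > 0" "b > 0"
  shows "s * gamma_dens a (b/s) (s*g) = gamma_dens a b g"
proof (cases "g > 0")
  case True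
  have e1: "(b/s) powr a = b powr a / s powr a" using assms by (simp add: powr_divide)
  have e2: "(s*g) powr (a-1) = s powr (a-1) * g powr (a-1)" using assms True by (simp add: powr_mult)
  have e3: "s powr (a-1) = s powr a / s" using assms by (simp add: powr_diff)
  have e4: "exp (- (b/s) * (s*g)) = exp (- b * g)" using assms by simp
  have sp: "s powr a > 0" using assms by simp
  show ?thesis using True assms unfolding gamma_dens_def e1 e2 e3 e4
    using sp by (simp add: zero_less_mult_iff field_simps)
next
  case False
  then show ?thesis using assms by (simp add: gamma_dens_def zero_less_mult_iff)
qed

lemma nn_int_gamma_affine:
  assumes s: "s > 0" and b: "b > 0" and h[measurable]: "h \<in> borel_measurable borel"
  shows "(\<integral>\<^sup>+g. h (s*g + t) \<partial>gamma_law a b) = (\<integral>\<^sup>+w. ennreal (gamma_dens a (b/s) (w - t)) * h w \<partial>lborel)"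
proof -
  have "(\<integral>\<^sup>+w. ennreal (gamma_dens a (b/s) (w - t)) * h w \<partial>lborel)
     = ennreal \<bar>s\<bar> * (\<integral>\<^sup>+g. ennreal (gamma_dens a (b/s) ((t + s*g) - t)) * h (t + s*g) \<partial>lborel)"
    by (rule nn_integral_real_affine) (use s in auto)
  also have "\<dots> = (\<integral>\<^sup>+g. ennreal s * (ennreal (gamma_dens a (b/s) (s*g)) * h (s*g + t)) \<partial>lborel)"
  proof -
    have "(\<integral>\<^sup>+g. ennreal (gamma_dens a (b/s) ((t + s*g) - t)) * h (t + s*g) \<partial>lborel)
        = (\<integral>\<^sup>+g. ennreal (gamma_dens a (b/s) (s*g)) * h (s*g + t) \<partial>lborel)"
      by (intro nn_integral_cong) (simp add: add.commute)
    then show ?thesis using s by (simp add: nn_integral_cmult)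
  qed
  also have "\<dots> = (\<integral>\<^sup>+g. ennreal (gamma_dens a b g) * h (s*g + t) \<partial>lborel)"
    using s b by (intro nn_integral_cong) (simp add: mult.assoc[symmetric] ennreal_mult'[symmetric] gd_scale)
  also have "\<dots> = (\<integral>\<^sup>+g. h (s*g + t) \<partial>gamma_law a b)"
    unfolding gamma_law_def by (subst nn_integral_density) auto
  finally show ?thesis by simp
qed

lemma distr_gamma_affine:
  assumes s: "s > 0" and b: "b > 0"
  shows "distr (gamma_law a b) borel (\<lambda>g. s*g + t) = density lborel (\<lambda>w. ennreal (gamma_dens a (b/s) (w - t)))"
proof (rule measure_eqI)
  fix A assume A: "A \<in> sets (distr (gamma_law a b) borel (\<lambda>g. s*g + t))"
  then have A': "A \<in> sets borel" by simp
  have "emeasure (distr (gamma_law a b) borel (\<lambda>g. s*g + t)) A = (\<integral>\<^sup>+g. indicator A (s*g+t) \<partial>gamma_law a b)"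
  proof -
    have m: "(\<lambda>g. s*g+t) \<in> borel_measurable borel" by simp
    have V: "(\<lambda>g. s*g+t) -` A \<in> sets borel" using measurable_sets[OF m A'] by simp
    have "emeasure (distr (gamma_law a b) borel (\<lambda>g. s*g + t)) A = emeasure (gamma_law a b) ((\<lambda>g. s*g+t) -` A)"
      using A' by (subst emeasure_distr) auto
    also have "\<dots> = (\<integral>\<^sup>+g. indicator ((\<lambda>g. s*g+t) -` A) g \<partial>gamma_law a b)"
      using V by (subst nn_integral_indicator) auto
    also have "\<dots> = (\<integral>\<^sup>+g. indicator A (s*g+t) \<partial>gamma_law a b)"
      by (intro nn_integral_cong) (simp add: indicator_def)
    finally show ?thesis .
  qed
  also have "\<dots> = (\<integral>\<^sup>+w. ennreal (gamma_dens a (b/s) (w - t)) * indicator A w \<partial>lborel)"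
    by (rule nn_int_gamma_affine) (use s b A' in auto)
  also have "\<dots> = emeasure (density lborel (\<lambda>w. ennreal (gamma_dens a (b/s) (w - t)))) A"
    using A' by (subst emeasure_density) auto
  finally show "emeasure (distr (gamma_law a b) borel (\<lambda>g. s*g + t)) A = emeasure (density lborel (\<lambda>w. ennreal (gamma_dens a (b/s) (w - t)))) A" .
qed simp

lemma conv_gd:
  fixes a k b w :: real
  assumes a: "a > 0" and k: "k > 0" and b: "b > 0"
  shows "(\<integral>\<^sup>+u. ennreal (gamma_dens a b (w - u)) * ennreal (gamma_dens k b u) \<partial>lborel) = ennreal (gamma_dens (a+k) b w)"
proof (cases "w > 0")
  case False
  have "(\<integral>\<^sup>+u. ennreal (gamma_dens a b (w - u)) * ennreal (gamma_dens k b u) \<partial>lborel) = (\<integral>\<^sup>+(u::real). 0 \<partial>lborel)"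
    using False by (intro nn_integral_cong) (auto simp: gamma_dens_def)
  then show ?thesis using False by (simp add: gamma_dens_def)
next
  case w: True
  have ga: "Gamma a > 0" and gk: "Gamma k > 0" and gak: "Gamma (a+k) > 0"
    using a k by (auto intro: Gamma_real_pos)
  define D where "D = b powr (a+k) / (Gamma a * Gamma k) * w powr (a+k-2) * exp (-b*w)"
  have D0: "D \<ge> 0" unfolding D_def using ga gk by auto
  let ?B = "\<lambda>t::real. t powr (k-1) * (1-t) powr (a-1)"
  have "(\<integral>\<^sup>+u. ennreal (gamma_dens a b (w - u)) * ennreal (gamma_dens k b u) \<partial>lborel)
     = ennreal \<bar>w\<bar> * (\<integral>\<^sup>+t. ennreal (gamma_dens a b (w - (0 + w*t))) * ennreal (gamma_dens k b (0 + w*t)) \<partial>lborel)"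
    by (rule nn_integral_real_affine) (use w in auto)
  also have "(\<integral>\<^sup>+t. ennreal (gamma_dens a b (w - (0 + w*t))) * ennreal (gamma_dens k b (0 + w*t)) \<partial>lborel)
     = (\<integral>\<^sup>+t. ennreal D * (ennreal (?B t) * indicator {0..1} t) \<partial>lborel)"
  proof (intro nn_integral_cong)
    fix t :: real
    show "ennreal (gamma_dens a b (w - (0 + w*t))) * ennreal (gamma_dens k b (0 + w*t)) = ennreal D * (ennreal (?B t) * indicator {0..1} t)"
    proof (cases "0 < t \<and> t < 1")
      case True
      have pos1: "w - w*t > 0" using True w by (simp add: algebra_simps)
      have pos2: "w*t > 0" using True w by simp
      have e1: "(w - w*t) powr (a-1) = w powr (a-1) * (1-t) powr (a-1)"
        using True w by (simp add: powr_mult[symmetric] algebra_simps)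
      have e2: "(w*t) powr (k-1) = w powr (k-1) * t powr (k-1)"
        using True w by (simp add: powr_mult)
      have e3: "w powr (a+k-2) = w powr (a-1) * w powr (k-1)"
        using w by (simp add: powr_add[symmetric])
      have e4: "b powr (a+k) = b powr a * b powr k" by (simp add: powr_add)
      have e5: "exp (- b * w) = exp (- b * (w - w*t)) * exp (- b * (w*t))"
        by (simp add: exp_add[symmetric] algebra_simps)
      have "gamma_dens a b (w - (0 + w*t)) * gamma_dens k b (0 + w*t) = D * ?B t"
        using pos1 pos2 unfolding gamma_dens_def D_def e3 e4 e5 by (simp add: e1 e2)
      moreover have "?B t \<ge> 0" by simp
      ultimately show ?thesis using True D0
        by (simp add: ennreal_mult'[symmetric] gd_nonneg a k b ennreal_mult''[symmetric] indicator_def)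
    next
      case False
      then have "t \<le> 0 \<or> t \<ge> 1" by auto
      then have z: "gamma_dens a b (w - (0 + w*t)) * gamma_dens k b (0 + w*t) = 0"
        using w by (auto simp: gamma_dens_def mult_le_cancel_left1 zero_less_mult_iff)
      have "?B t * indicator {0..1} t = 0" using False by (auto simp: indicator_def)
      then have r: "ennreal (?B t) * indicator {0..1} t = 0"
        by (auto simp: indicator_def split: if_splits)
      have l: "ennreal (gamma_dens a b (w - (0 + w*t))) * ennreal (gamma_dens k b (0 + w*t)) = 0"
        using z by (simp add: ennreal_mult''[symmetric] gd_nonneg a k b del: ennreal_eq_0_iff)
      show ?thesis unfolding l r by simp
    qed
  qed
  also have "\<dots> = ennreal D * (\<integral>\<^sup>+t. ennreal (?B t) * indicator {0..1} t \<partial>lborel)"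
    by (rule nn_integral_cmult) measurable
  also have "(\<integral>\<^sup>+t. ennreal (?B t) * indicator {0..1} t \<partial>lborel) = ennreal (Beta k a)"
    by (rule nn_integral_has_integral_lebesgue') (use has_integral_Beta_real[OF k a] in auto)
  finally have "(\<integral>\<^sup>+u. ennreal (gamma_dens a b (w - u)) * ennreal (gamma_dens k b u) \<partial>lborel) = ennreal (w * D * Beta k a)"
    using w D0 ga gk gak by (simp add: ennreal_mult'[symmetric] Beta_def mult.assoc)
  also have "w * D * Beta k a = gamma_dens (a+k) b w"
  proof -
    have "w * w powr (a+k-2) = w powr (a + k - 1)" using w by (simp add: powr_diff power2_eq_square)
    then show ?thesis using w ga gk gak unfolding D_def gamma_dens_def Beta_def
      by (simp add: field_simps add.commute)
  qed
  finally show ?thesis .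
qed

locale sp =
  fixes alpha lam tau :: real
  assumes alpha: "alpha > 0" and lam: "lam > 0" and tau0: "0 < tau" and tau1: "tau < 1"
begin

definition "bb = lam / (1 - tau)"
definition "cc = lam * tau / (1 - tau)"

lemma bb_pos: "bb > 0" unfolding bb_def using lam tau1 by simp
lemma cc_pos: "cc > 0" unfolding cc_def using lam tau0 tau1 by simp
lemma cc_eq: "cc = bb / (1/tau)" unfolding cc_def bb_def by simp

definition "GK y = distr (gamma_law alpha lam) borel (\<lambda>g. (1 - tau) * g + tau * y)"
definition "KK k = (if k = 0 then return borel 0 else gamma_law (real k) (lam * tau / (1 - tau)))"

lemma GK_eq: "GK y = density lborel (\<lambda>w. ennreal (gamma_dens alpha bb (w - tau * y)))"
  unfolding GK_def bb_def using distr_gamma_affine[of "1 - tau" lam alpha "tau * y"] tau1 lam by simp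

lemma GK_meas[measurable]: "GK \<in> measurable borel (subprob_algebra borel)"
proof -
  have "(\<lambda>y. distr ((\<lambda>_. gamma_law alpha lam) y) borel ((\<lambda>y g. (1 - tau) * g + tau * y) y)) \<in> measurable borel (subprob_algebra borel)"
  proof (rule measurable_distr2[where M=borel])
    show "case_prod (\<lambda>y g. (1 - tau) * g + tau * y) \<in> measurable (borel \<Otimes>\<^sub>M borel) borel" by measurable
    have "gamma_law alpha lam \<in> space (subprob_algebra borel)"
      using prob_gamma_law[OF alpha lam] by (auto simp: space_subprob_algebra prob_space_imp_subprob_space)
    then show "(\<lambda>_. gamma_law alpha lam) \<in> measurable borel (subprob_algebra borel)" by simp
  qed
  then show ?thesis unfolding GK_def[abs_def] by simp
qed

lemma KK_space: "KK k \<in> space (subprob_algebra borel)"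
  unfolding KK_def using prob_gamma_law[of "real k" "lam * tau / (1 - tau)"] lam tau0 tau1
  by (auto simp: space_subprob_algebra prob_space_imp_subprob_space subprob_space_return)

lemma KK_meas: "KK \<in> measurable (count_space UNIV) (subprob_algebra borel)"
  using KK_space by simp

lemma sets_poisson[simp, measurable_cong]: "sets (poisson_law m) = sets (count_space UNIV)"
  by (simp add: poisson_law_def)

lemma space_poisson[simp]: "space (poisson_law m) = UNIV"
  by (simp add: poisson_law_def)

lemma KK_meas': "KK \<in> measurable (poisson_law m) (subprob_algebra borel)"
  by (subst measurable_cong_sets[OF sets_poisson refl]) (rule KK_meas)

lemma Ycond: "Y_cond_law lam tau x = bind (poisson_law (cc * x)) KK"
  unfolding Y_cond_law_def KK_def[abs_def] cc_def by (simp add: mult.commute mult.left_commute)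

lemma sets_Ycond[simp, measurable_cong]: "sets (Y_cond_law lam tau x) = sets borel"
  unfolding Ycond using KK_space
  by (subst sets_bind[where N=borel]) (auto simp: space_subprob_algebra)

lemma space_Ycond[simp]: "space (Y_cond_law lam tau x) = UNIV"
  using sets_eq_imp_space_eq[OF sets_Ycond[of x]] by simp

lemma nn_int_Ycond:
  assumes [measurable]: "f \<in> borel_measurable borel"
  shows "(\<integral>\<^sup>+y. f y \<partial>Y_cond_law lam tau x) = (\<Sum>k. ennreal ((cc*x)^k / fact k * exp (-(cc*x))) * (\<integral>\<^sup>+y. f y \<partial>KK k))"
proof -
  have "(\<integral>\<^sup>+y. f y \<partial>Y_cond_law lam tau x) = (\<integral>\<^sup>+k. (\<integral>\<^sup>+y. f y \<partial>KK k) \<partial>poisson_law (cc*x))"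
    unfolding Ycond by (rule nn_integral_bind[OF _ KK_meas']) simp
  also have "\<dots> = (\<integral>\<^sup>+k. ennreal ((cc*x)^k / fact k * exp (-(cc*x))) * (\<integral>\<^sup>+y. f y \<partial>KK k) \<partial>count_space UNIV)"
    unfolding poisson_law_def by (subst nn_integral_density) auto
  also have "\<dots> = (\<Sum>k. ennreal ((cc*x)^k / fact k * exp (-(cc*x))) * (\<integral>\<^sup>+y. f y \<partial>KK k))"
    by (rule nn_integral_count_space_nat)
  finally show ?thesis .
qed

lemma emeasure_GK: "A \<in> sets borel \<Longrightarrow> emeasure (GK y) A = (\<integral>\<^sup>+w. ennreal (gamma_dens alpha bb (w - tau * y)) * indicator A w \<partial>lborel)"
  unfolding GK_eq by (subst emeasure_density) auto

lemma KK_int: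
  assumes A: "A \<in> sets borel"
  shows "(\<integral>\<^sup>+y. emeasure (GK y) A \<partial>KK k) = (\<integral>\<^sup>+w. ennreal (gamma_dens (alpha + real k) bb w) * indicator A w \<partial>lborel)"
proof -
  have m[measurable]: "(\<lambda>y. emeasure (GK y) A) \<in> borel_measurable borel"
    using A by measurable
  show ?thesis
proof (cases "k = 0")
  case True
  have "(\<integral>\<^sup>+y. emeasure (GK y) A \<partial>KK k) = emeasure (GK 0) A"
    unfolding KK_def using True A
    by (simp add: nn_integral_return)
  then show ?thesis using True A by (simp add: emeasure_GK)
next
  case False
  then have k: "real k > 0" by simp
  have "(\<integral>\<^sup>+y. emeasure (GK y) A \<partial>KK k) = (\<integral>\<^sup>+y. ennreal (gamma_dens (real k) cc y) * emeasure (GK y) A \<partial>lborel)"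
    unfolding KK_def gamma_law_def cc_def using False by (simp add: nn_integral_density)
  also have "\<dots> = ennreal \<bar>1/tau\<bar> * (\<integral>\<^sup>+u. ennreal (gamma_dens (real k) cc (0 + (1/tau) * u)) * emeasure (GK (0 + (1/tau) * u)) A \<partial>lborel)"
    by (rule nn_integral_real_affine) (use tau0 in auto)
  also have "\<dots> = (\<integral>\<^sup>+u. ennreal (gamma_dens (real k) bb u) * emeasure (GK (u/tau)) A \<partial>lborel)"
  proof -
    have "ennreal (1/tau) * ennreal (gamma_dens (real k) cc ((1/tau) * u)) = ennreal (gamma_dens (real k) bb u)" for u
      using gd_scale[of "1/tau" bb "real k" u] tau0 bb_pos unfolding cc_eq
      by (simp add: ennreal_mult'[symmetric])
    then show ?thesis using tau0
      by (subst nn_integral_cmult[symmetric]) (auto simp: mult.assoc[symmetric] intro!: nn_integral_cong)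
  qed
  also have "\<dots> = (\<integral>\<^sup>+u. (\<integral>\<^sup>+w. ennreal (gamma_dens (real k) bb u) * (ennreal (gamma_dens alpha bb (w - u)) * indicator A w) \<partial>lborel) \<partial>lborel)"
  proof (intro nn_integral_cong)
    fix u :: real
    have "emeasure (GK (u/tau)) A = (\<integral>\<^sup>+w. ennreal (gamma_dens alpha bb (w - u)) * indicator A w \<partial>lborel)"
      using tau0 A by (simp add: emeasure_GK)
    then show "ennreal (gamma_dens (real k) bb u) * emeasure (GK (u / tau)) A = (\<integral>\<^sup>+w. ennreal (gamma_dens (real k) bb u) * (ennreal (gamma_dens alpha bb (w - u)) * indicator A w) \<partial>lborel)"
      using A by (simp add: nn_integral_cmult)
  qed
  also have "\<dots> = (\<integral>\<^sup>+w. (\<integral>\<^sup>+u. ennreal (gamma_dens (real k) bb u) * (ennreal (gamma_dens alpha bb (w - u)) * indicator A w) \<partial>lborel) \<partial>lborel)"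
    using A by (subst lborel_pair.Fubini') auto
  also have "\<dots> = (\<integral>\<^sup>+w. (\<integral>\<^sup>+u. ennreal (gamma_dens alpha bb (w - u)) * ennreal (gamma_dens (real k) bb u) \<partial>lborel) * indicator A w \<partial>lborel)"
    using A by (intro nn_integral_cong) (subst nn_integral_multc[symmetric], auto simp: ac_simps)
  also have "\<dots> = (\<integral>\<^sup>+w. ennreal (gamma_dens (alpha + real k) bb w) * indicator A w \<partial>lborel)"
    by (rule nn_integral_cong) (simp only: conv_gd[OF alpha k bb_pos])
  finally show ?thesis .
qed
qed

end

lemma poisson_sums: "(m::real) \<ge> 0 \<Longrightarrow> (\<lambda>k. m^k / fact k * exp (-m)) sums 1"
proof -
  have "(\<lambda>k. m^k / fact k) sums exp m" using exp_converges[of m] by (simp add: divide_inverse mult.commute)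
  from sums_mult2[OF this, of "exp (-m)"] show ?thesis by (simp add: exp_minus)
qed

lemma poisson_mean_sums: "(\<lambda>k. real k * (m^k / fact k * exp (-m))) sums (m::real)"
proof -
  have "(\<lambda>k. m^k / fact k) sums exp m" using exp_converges[of m] by (simp add: divide_inverse mult.commute)
  from sums_mult[OF sums_mult2[OF this, of "exp (-m)"], of m]
  have "(\<lambda>k. m * (m^k / fact k * exp (-m))) sums m" by (simp only: exp_minus_inverse mult_1_right)
  moreover have "(\<lambda>k. m * (m^k / fact k * exp (-m))) = (\<lambda>k. real (Suc k) * (m^(Suc k) / fact (Suc k) * exp (-m)))"
    by (rule ext) (simp add: field_simps del: of_nat_Suc)
  ultimately have "(\<lambda>k. real (Suc k) * (m^(Suc k) / fact (Suc k) * exp (-m))) sums m" by (simp only:)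
  from sums_Suc[OF this] show ?thesis by simp
qed

context sp begin

definition "qq k x = (cc*x)^k / fact k * exp (-(cc*x))"
definition "NN x = bind (Y_cond_law lam tau x) GK"
definition "HH x w = (\<Sum>k. ennreal (qq k x * gamma_dens (alpha + real k) bb w))"

lemma qq_meas[measurable]: "qq k \<in> borel_measurable borel" unfolding qq_def by measurable

lemma HH_meas[measurable]: "(\<lambda>(x,w). HH x w) \<in> borel_measurable (borel \<Otimes>\<^sub>M borel)"
  unfolding HH_def by measurable

lemma GK_meas_Y: "GK \<in> measurable (Y_cond_law lam tau x) (subprob_algebra borel)"
  by (subst measurable_cong_sets[OF sets_Ycond refl]) (rule GK_meas)

lemma sets_NN[simp, measurable_cong]: "sets (NN x) = sets borel"
  unfolding NN_def by (rule sets_bind[where N=borel]) (auto simp: GK_def)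

lemma NN_emeasure_sum:
  assumes A: "A \<in> sets borel"
  shows "emeasure (NN x) A = (\<Sum>k. ennreal (qq k x) * (\<integral>\<^sup>+w. ennreal (gamma_dens (alpha + real k) bb w) * indicator A w \<partial>lborel))"
proof -
  have "emeasure (NN x) A = (\<integral>\<^sup>+y. emeasure (GK y) A \<partial>Y_cond_law lam tau x)"
    unfolding NN_def by (rule emeasure_bind[OF _ GK_meas_Y A]) simp
  also have "\<dots> = (\<Sum>k. ennreal (qq k x) * (\<integral>\<^sup>+y. emeasure (GK y) A \<partial>KK k))"
    unfolding qq_def using A by (subst nn_int_Ycond) auto
  also have "\<dots> = (\<Sum>k. ennreal (qq k x) * (\<integral>\<^sup>+w. ennreal (gamma_dens (alpha + real k) bb w) * indicator A w \<partial>lborel))"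
    using A by (simp add: KK_int)
  finally show ?thesis .
qed

lemma NN_emeasure:
  assumes A: "A \<in> sets borel"
  shows "emeasure (NN x) A = (\<integral>\<^sup>+w. HH x w * indicator A w \<partial>lborel)"
proof -
  have "(\<integral>\<^sup>+w. HH x w * indicator A w \<partial>lborel) = (\<integral>\<^sup>+w. (\<Sum>k. ennreal (qq k x) * (ennreal (gamma_dens (alpha + real k) bb w) * indicator A w)) \<partial>lborel)"
  proof (intro nn_integral_cong)
    fix w
    have "HH x w * indicator A w = (\<Sum>k. ennreal (qq k x * gamma_dens (alpha + real k) bb w) * indicator A w)"
      unfolding HH_def by (rule ennreal_suminf_multc[symmetric])
    also have "\<dots> = (\<Sum>k. ennreal (qq k x) * (ennreal (gamma_dens (alpha + real k) bb w) * indicator A w))"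
      by (intro suminf_cong) (simp add: ennreal_mult'' gd_nonneg alpha bb_pos add_pos_nonneg mult.assoc)
    finally show "HH x w * indicator A w = (\<Sum>k. ennreal (qq k x) * (ennreal (gamma_dens (alpha + real k) bb w) * indicator A w))" .
  qed
  also have "\<dots> = (\<Sum>k. (\<integral>\<^sup>+w. ennreal (qq k x) * (ennreal (gamma_dens (alpha + real k) bb w) * indicator A w) \<partial>lborel))"
    using A by (intro nn_integral_suminf) auto
  also have "\<dots> = (\<Sum>k. ennreal (qq k x) * (\<integral>\<^sup>+w. ennreal (gamma_dens (alpha + real k) bb w) * indicator A w \<partial>lborel))"
    using A by (simp add: nn_integral_cmult)
  finally show ?thesis using NN_emeasure_sum[OF A] by simp
qed

lemma NN_mass: "emeasure (NN x) UNIV = (\<Sum>k. ennreal (qq k x))"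
proof -
  have "emeasure (NN x) UNIV = (\<Sum>k. ennreal (qq k x) * (\<integral>\<^sup>+w. ennreal (gamma_dens (alpha + real k) bb w) * indicator UNIV w \<partial>lborel))"
    by (rule NN_emeasure_sum) simp
  also have "\<dots> = (\<Sum>k. ennreal (qq k x))"
    using nn_int_gd alpha bb_pos by (simp add: add_pos_nonneg)
  finally show ?thesis .
qed

lemma space_NN[simp]: "space (NN x) = UNIV"
  using sets_eq_imp_space_eq[OF sets_NN[of x]] by simp

lemma NN_prob: "x \<ge> 0 \<Longrightarrow> prob_space (NN x)"
proof (rule prob_spaceI)
  assume x: "x \<ge> 0"
  have "(\<Sum>k. ennreal (qq k x)) = ennreal 1"
    unfolding qq_def using x cc_pos
    by (intro suminf_ennreal_eq poisson_sums) auto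
  then show "emeasure (NN x) (space (NN x)) = 1" using NN_mass by simp
qed

lemma NN_not_sub: "x < 0 \<Longrightarrow> \<not> subprob_space (NN x)"
proof
  assume x: "x < 0" and s: "subprob_space (NN x)"
  have "(\<Sum>k\<in>{0}. ennreal (qq k x)) \<le> (\<Sum>k. ennreal (qq k x))"
    by (rule sum_le_suminf) auto
  also have "\<dots> = emeasure (NN x) (space (NN x))" using NN_mass by simp
  also have "\<dots> \<le> 1" using s by (rule subprob_space.emeasure_space_le_1)
  finally have "exp (-(cc*x)) \<le> 1" by (simp add: qq_def)
  moreover have "-(cc*x) > 0" using x cc_pos by (simp add: mult_pos_neg)
  ultimately show False by simp
qed

end

context sp begin

definition "NN' x = NN (max x 0)"

lemma NN'_meas: "NN' \<in> measurable borel (subprob_algebra borel)"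
proof (rule measurable_subprob_algebra)
  fix a :: real
  show "subprob_space (NN' a)" unfolding NN'_def
    by (rule prob_space_imp_subprob_space, rule NN_prob) simp
  show "sets (NN' a) = sets borel" unfolding NN'_def by simp
next
  fix A :: "real set" assume A: "A \<in> sets borel"
  have "(\<lambda>a. \<integral>\<^sup>+w. HH (max a 0) w * indicator A w \<partial>lborel) \<in> borel_measurable borel"
    using A HH_meas by measurable
  moreover have "emeasure (NN' a) A = (\<integral>\<^sup>+w. HH (max a 0) w * indicator A w \<partial>lborel)" for a
    unfolding NN'_def using A by (rule NN_emeasure)
  ultimately show "(\<lambda>a. emeasure (NN' a) A) \<in> borel_measurable borel" by simp
qed

lemma smart_eq: "smart_path_law alpha lam mu tau = bind mu NN"
  unfolding smart_path_law_def NN_def[abs_def] GK_def[abs_def] ..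

lemma bind_NN:
  assumes smu: "sets mu = sets borel" and null: "{x. x < 0} \<in> null_sets mu"
  shows "bind mu NN = bind mu NN'"
proof -
  have sp: "space mu = UNIV" using sets_eq_imp_space_eq[OF smu] by simp
  have sa: "subprob_algebra (NN (SOME x. x \<in> space mu)) = subprob_algebra borel"
    by (rule subprob_algebra_cong) simp
  have m': "NN' \<in> measurable mu (subprob_algebra borel)"
    using NN'_meas by (subst measurable_cong_sets[OF smu refl])
  have "distr mu (subprob_algebra borel) NN = distr mu (subprob_algebra borel) NN'"
    unfolding distr_def
  proof (rule measure_of_eq)
    show "sets (subprob_algebra borel) \<subseteq> Pow (space (subprob_algebra borel))"
      by (rule sets.space_closed)
    fix A :: "real measure set" assume "A \<in> sigma_sets (space (subprob_algebra borel)) (sets (subprob_algebra borel))"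
    then have A: "A \<in> sets (subprob_algebra borel)" by (simp add: sets.sigma_sets_eq)
    then have As: "A \<subseteq> space (subprob_algebra borel)" by (rule sets.sets_into_space)
    have B: "NN' -` A \<inter> space mu \<in> sets mu" using measurable_sets[OF m' A] .
    have eq: "NN -` A \<inter> space mu = (NN' -` A \<inter> space mu) - {x. x < 0}"
    proof (intro set_eqI iffI)
      fix x assume x: "x \<in> NN -` A \<inter> space mu"
      have "x \<ge> 0"
      proof (rule ccontr)
        assume "\<not> x \<ge> 0"
        then have "\<not> subprob_space (NN x)" by (intro NN_not_sub) simp
        moreover have "NN x \<in> space (subprob_algebra borel)" using x As by auto
        ultimately show False by (simp add: space_subprob_algebra)
      qed
      then show "x \<in> (NN' -` A \<inter> space mu) - {x. x < 0}" using x by (simp add: NN'_def)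
    next
      fix x assume x: "x \<in> (NN' -` A \<inter> space mu) - {x. x < 0}"
      then have "max x 0 = x" by auto
      then show "x \<in> NN -` A \<inter> space mu" using x by (simp add: NN'_def)
    qed
    show "emeasure mu (NN -` A \<inter> space mu) = emeasure mu (NN' -` A \<inter> space mu)"
      unfolding eq by (rule emeasure_Diff_null_set[OF null B])
  qed
  moreover have "bind mu NN = join (distr mu (subprob_algebra borel) NN)"
    using bind_nonempty[of mu NN] sa sp by simp
  ultimately show ?thesis
    using bind_nonempty''[OF m'] sp by simp
qed

end

context sp begin

definition "PP mu k = (\<integral>\<^sup>+x. ennreal (qq k (max x 0)) \<partial>mu)"
definition "DD mu w = (\<Sum>k. PP mu k * ennreal (gamma_dens (alpha + real k) bb w))"

lemma DD_meas[measurable]: "DD mu \<in> borel_measurable borel"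
  unfolding DD_def by measurable

lemma smart_density:
  assumes pmu: "prob_space mu" and smu: "sets mu = sets borel" and pos: "AE x in mu. x > 0"
  shows "smart_path_law alpha lam mu tau = density lborel (DD mu)"
proof -
  interpret mu: prob_space mu by (fact pmu)
  interpret pair_sigma_finite mu lborel ..
  have sp: "space mu = UNIV" using sets_eq_imp_space_eq[OF smu] by simp
  have Ns: "{x::real. x < 0} \<in> sets mu" using smu by simp
  have ae: "AE x in mu. \<not> x < 0" using pos by eventually_elim simp
  have eq: "{x \<in> space mu. \<not> \<not> x < 0} = {x. x < 0}" using sp by simp
  have "emeasure mu {x. x < 0} = 0"
    using AE_iff_measurable[OF Ns eq] ae by simp
  then have null: "{x::real. x < 0} \<in> null_sets mu" using Ns by (simp add: null_sets_def)
  have m': "NN' \<in> measurable mu (subprob_algebra borel)"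
    using NN'_meas by (subst measurable_cong_sets[OF smu refl])
  show ?thesis
  proof (rule measure_eqI)
    show "sets (smart_path_law alpha lam mu tau) = sets (density lborel (DD mu))"
      unfolding smart_eq bind_NN[OF smu null]
      using sets_bind[of mu NN' borel] sp by (simp add: NN'_def)
  next
    fix A assume "A \<in> sets (smart_path_law alpha lam mu tau)"
    then have A: "A \<in> sets borel"
      unfolding smart_eq bind_NN[OF smu null]
      using sets_bind[of mu NN' borel] sp by (simp add: NN'_def)
    have meas: "(\<lambda>(x, w). HH (max x 0) w * indicator A w) \<in> borel_measurable (mu \<Otimes>\<^sub>M lborel)"
    proof -
      have "(\<lambda>(x, w). HH (max x 0) w * indicator A w) \<in> borel_measurable (borel \<Otimes>\<^sub>M borel)"
        using A HH_meas by measurable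
      then show ?thesis
        by (subst measurable_cong_sets[OF sets_pair_measure_cong[OF smu sets_lborel] refl])
    qed
    have "emeasure (smart_path_law alpha lam mu tau) A = (\<integral>\<^sup>+x. emeasure (NN' x) A \<partial>mu)"
      unfolding smart_eq bind_NN[OF smu null] using sp by (intro emeasure_bind[OF _ m' A]) simp
    also have "\<dots> = (\<integral>\<^sup>+x. (\<integral>\<^sup>+w. HH (max x 0) w * indicator A w \<partial>lborel) \<partial>mu)"
      unfolding NN'_def using A by (simp add: NN_emeasure)
    also have "\<dots> = (\<integral>\<^sup>+w. (\<integral>\<^sup>+x. HH (max x 0) w * indicator A w \<partial>mu) \<partial>lborel)"
      using Fubini'[OF meas] by simp
    also have "\<dots> = (\<integral>\<^sup>+w. DD mu w * indicator A w \<partial>lborel)"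
    proof (intro nn_integral_cong)
      fix w
      have "(\<integral>\<^sup>+x. HH (max x 0) w * indicator A w \<partial>mu) = (\<integral>\<^sup>+x. HH (max x 0) w \<partial>mu) * indicator A w"
        using smu by (subst nn_integral_multc) (auto simp: measurable_cong_sets[OF smu refl])
      also have "(\<integral>\<^sup>+x. HH (max x 0) w \<partial>mu) = (\<Sum>k. (\<integral>\<^sup>+x. ennreal (gamma_dens (alpha + real k) bb w) * ennreal (qq k (max x 0)) \<partial>mu))"
        unfolding HH_def
        by (subst nn_integral_suminf[symmetric])
           (auto simp: measurable_cong_sets[OF smu refl] ennreal_mult'' gd_nonneg alpha bb_pos add_pos_nonneg mult.commute
                 intro!: nn_integral_cong)
      also have "\<dots> = DD mu w"
        unfolding DD_def PP_def
      proof (intro suminf_cong)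
        fix n
        have qm: "(\<lambda>x. ennreal (qq n (max x 0))) \<in> borel_measurable mu"
          by (subst measurable_cong_sets[OF smu refl]) measurable
        show "(\<integral>\<^sup>+x. ennreal (gamma_dens (alpha + real n) bb w) * ennreal (qq n (max x 0)) \<partial>mu) = (\<integral>\<^sup>+x. ennreal (qq n (max x 0)) \<partial>mu) * ennreal (gamma_dens (alpha + real n) bb w)"
          using nn_integral_cmult[OF qm, of "ennreal (gamma_dens (alpha + real n) bb w)"] by (simp only: mult.commute)
      qed
      finally show "(\<integral>\<^sup>+x. HH (max x 0) w * indicator A w \<partial>mu) = DD mu w * indicator A w" .
    qed
    also have "\<dots> = emeasure (density lborel (DD mu)) A"
      using A by (simp add: emeasure_density)
    finally show "emeasure (smart_path_law alpha lam mu tau) A = emeasure (density lborel (DD mu)) A" .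
  qed
qed

end

lemma Gamma_Suc_shift: "a > 0 \<Longrightarrow> Gamma (a + real (Suc n)) = (a + real n) * Gamma (a + real n)"
proof -
  assume a: "a > 0"
  have "a + real n \<notin> \<int>\<^sub>\<le>\<^sub>0" using a nonpos_Ints_nonpos by force
  then have "Gamma ((a + real n) + 1) = (a + real n) * Gamma (a + real n)" by (rule Gamma_plus1)
  moreover have "a + real (Suc n) = (a + real n) + 1" by simp
  ultimately show ?thesis by (simp only:)
qed

lemma summ_gen:
  fixes a r :: real assumes a: "a > 0" and r: "r \<ge> 0"
  shows "summable (\<lambda>k. (real k + 1)^2 * r^k / Gamma (a + real k))"
proof (rule summable_ratio_test[where c = "1/2" and N = "nat \<lceil>8*r\<rceil>"])
  fix n assume n: "n \<ge> nat \<lceil>8*r\<rceil>"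
  then have n8: "real n \<ge> 8*r" by linarith
  have g: "Gamma (a + real n) > 0" using a by simp
  have an: "a + real n > 0" using a by simp
  have "(real n + 2)^2 * r \<le> 4 * (real n + 1)^2 * r"
    using r by (intro mult_right_mono) (auto simp: power2_eq_square algebra_simps)
  also have "4 * (real n + 1)^2 * r \<le> (1/2) * (real n + 1)^2 * (a + real n)"
  proof -
    have "8 * r \<le> a + real n" using n8 a by linarith
    then have "4 * r \<le> (1/2) * (a + real n)" by simp
    from mult_left_mono[OF this, of "(real n + 1)^2"] show ?thesis by (simp add: algebra_simps)
  qed
  finally have key: "(real n + 2)^2 * r \<le> (1/2) * (real n + 1)^2 * (a + real n)" .
  have "norm ((real (Suc n) + 1)^2 * r^(Suc n) / Gamma (a + real (Suc n)))
        = ((real n + 2)^2 * r) * r^n / ((a + real n) * Gamma (a + real n))"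
    using r g an by (subst Gamma_Suc_shift[OF a]) (simp add: abs_mult)
  also have "\<dots> \<le> ((1/2) * (real n + 1)^2 * (a + real n)) * r^n / ((a + real n) * Gamma (a + real n))"
    using key r g an by (intro divide_right_mono mult_right_mono) auto
  also have "\<dots> = 1/2 * norm ((real n + 1)^2 * r^n / Gamma (a + real n))"
    using r g an by (simp add: abs_mult)
  finally show "norm ((real (Suc n) + 1)^2 * r^(Suc n) / Gamma (a + real (Suc n))) \<le> 1/2 * norm ((real n + 1)^2 * r^n / Gamma (a + real n))" .
qed simp

locale ps =
  fixes alpha bb :: real and pr :: "nat \<Rightarrow> real"
  assumes alpha: "alpha > 0" and bb: "bb > 0" and pr0: "\<And>k. 0 \<le> pr k" and pr1: "\<And>k. pr k \<le> 1"
    and prpos: "pr 0 > 0"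
begin

definition "aa k = pr k * bb^k / Gamma (alpha + real k)"
definition "PS w = (\<Sum>k. aa k * w^k)"
definition "PS' w = (\<Sum>k. diffs aa k * w^k)"

lemma aa_nonneg: "aa k \<ge> 0"
  unfolding aa_def using pr0 bb alpha by (simp add: add_pos_nonneg)

lemma aa_bound: "\<bar>aa k * z^k\<bar> \<le> (real k + 1)^2 * (bb * \<bar>z\<bar>)^k / Gamma (alpha + real k)"
proof -
  have g: "Gamma (alpha + real k) > 0" using alpha by simp
  have "\<bar>aa k * z^k\<bar> = pr k * (bb * \<bar>z\<bar>)^k / Gamma (alpha + real k)"
    unfolding aa_def using pr0[of k] bb g by (simp add: abs_mult power_abs power_mult_distrib)
  also have "\<dots> \<le> 1 * (bb * \<bar>z\<bar>)^k / Gamma (alpha + real k)"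
    using pr1[of k] g bb by (intro divide_right_mono mult_right_mono) auto
  also have "\<dots> \<le> (real k + 1)^2 * (bb * \<bar>z\<bar>)^k / Gamma (alpha + real k)"
  proof -
    have "1 \<le> (real k + 1)^2" by (rule one_le_power) simp
    then show ?thesis using g bb by (intro divide_right_mono mult_right_mono) auto
  qed
  finally show ?thesis .
qed

lemma aa_bound2: "\<bar>(real k)^2 * (aa k * z^k)\<bar> \<le> (real k + 1)^2 * (bb * \<bar>z\<bar>)^k / Gamma (alpha + real k)"
proof -
  have g: "Gamma (alpha + real k) > 0" using alpha by simp
  have "\<bar>(real k)^2 * (aa k * z^k)\<bar> = (real k)^2 * (pr k * (bb * \<bar>z\<bar>)^k / Gamma (alpha + real k))"
    unfolding aa_def using pr0[of k] bb g by (simp add: abs_mult power_abs power_mult_distrib)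
  also have "\<dots> \<le> (real k + 1)^2 * (1 * (bb * \<bar>z\<bar>)^k / Gamma (alpha + real k))"
    using pr1[of k] g bb pr0[of k]
    by (intro mult_mono divide_right_mono mult_right_mono) (auto simp: power_mono)
  finally show ?thesis by simp
qed

lemma summ_aa: "summable (\<lambda>k. aa k * z^k)"
  by (rule summable_comparison_test'[OF summ_gen[OF alpha, of "bb * \<bar>z\<bar>"], of 0])
     (use bb aa_bound in auto)

lemma summ_aa2: "summable (\<lambda>k. (real k)^2 * (aa k * z^k))"
  by (rule summable_comparison_test'[OF summ_gen[OF alpha, of "bb * \<bar>z\<bar>"], of 0])
     (use bb aa_bound2 in auto)

lemma summ_aa1: "z \<ge> 0 \<Longrightarrow> summable (\<lambda>k. real k * (aa k * z^k))"
proof (rule summable_comparison_test'[OF summ_aa2[of z], of 0])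
  fix n :: nat assume z: "z \<ge> 0"
  have "0 \<le> aa n * z^n" using aa_nonneg z by simp
  moreover have "real n \<le> (real n)^2" by (cases n) (auto simp: power2_eq_square)
  moreover have "norm (real n * (aa n * z^n)) = real n * (aa n * z^n)"
    using \<open>0 \<le> aa n * z^n\<close> by simp
  ultimately show "norm (real n * (aa n * z^n)) \<le> (real n)^2 * (aa n * z^n)"
    by (simp add: mult_right_mono)
qed

lemma PS_deriv: "(PS has_real_derivative PS' w) (at w)"
  unfolding PS_def[abs_def] PS'_def
  by (rule termdiffs_strong[OF summ_aa[of "\<bar>w\<bar> + 1"]]) simp

lemma PS_cont: "continuous_on UNIV PS"
  using PS_deriv by (intro continuous_at_imp_continuous_on) (auto intro: DERIV_isCont)

lemma PS'_summ: "summable (\<lambda>k. diffs aa k * z^k)"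
  using termdiff_converges_all[of aa z] summ_aa by auto

lemma PS'_deriv: "\<exists>D. (PS' has_real_derivative D) (at w)"
  unfolding PS'_def[abs_def]
  using termdiffs_strong[of "diffs aa" "\<bar>w\<bar> + 1" w] PS'_summ by auto

lemma PS'_cont: "continuous_on UNIV PS'"
  using PS'_deriv by (intro continuous_at_imp_continuous_on) (auto intro: DERIV_isCont)

lemma wPS': "w * PS' w = (\<Sum>k. real k * (aa k * w^k))"
proof -
  have s: "(\<lambda>n. diffs aa n * w^n) sums PS' w" unfolding PS'_def using PS'_summ by (rule summable_sums)
  have "(\<lambda>n. w * (diffs aa n * w^n)) sums (w * PS' w)" by (rule sums_mult[OF s])
  moreover have "(\<lambda>n. w * (diffs aa n * w^n)) = (\<lambda>n. real (Suc n) * (aa (Suc n) * w^(Suc n)))"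
    by (rule ext) (simp add: diffs_def algebra_simps del: of_nat_Suc)
  ultimately have "(\<lambda>n. real (Suc n) * (aa (Suc n) * w^(Suc n))) sums (w * PS' w)" by simp
  from sums_Suc[OF this] have "(\<lambda>k. real k * (aa k * w^k)) sums (w * PS' w)" by simp
  then show ?thesis by (simp add: sums_iff)
qed

lemma PS_pos: "w \<ge> 0 \<Longrightarrow> PS w \<ge> aa 0" "aa 0 > 0"
proof -
  assume w: "w \<ge> 0"
  have "(\<Sum>k\<in>{0}. aa k * w^k) \<le> PS w"
    unfolding PS_def by (rule sum_le_suminf[OF summ_aa]) (use aa_nonneg w in auto)
  then show "PS w \<ge> aa 0" by simp
next
  show "aa 0 > 0" unfolding aa_def using prpos alpha by simp
qed

end

lemma series_CS:
  fixes v :: "nat \<Rightarrow> real"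
  assumes v0: "\<And>k. v k \<ge> 0" and sv: "summable v" and s2: "summable (\<lambda>k. (real k)^2 * v k)"
    and s1: "summable (\<lambda>k. real k * v k)"
  shows "(\<Sum>k. real k * v k)^2 \<le> (\<Sum>k. v k) * (\<Sum>k. (real k)^2 * v k)"
proof -
  define U where "U = (\<Sum>k. real k * v k)"
  define V where "V = (\<Sum>k. v k)"
  define T where "T = (\<Sum>k. (real k)^2 * v k)"
  have U0: "U \<ge> 0" unfolding U_def using v0 by (intro suminf_nonneg s1) auto
  have V0: "V \<ge> 0" unfolding V_def using v0 by (intro suminf_nonneg sv) auto
  have UT: "U \<le> T" unfolding U_def T_def
  proof (rule suminf_le[OF _ s1 s2])
    fix k
    have "real k \<le> (real k)^2" by (cases k) (auto simp: power2_eq_square)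
    then show "real k * v k \<le> (real k)^2 * v k" using v0[of k] by (rule mult_right_mono)
  qed
  show ?thesis
  proof (cases "U = 0")
    case True
    then show ?thesis using V0 UT unfolding U_def[symmetric] V_def[symmetric] T_def[symmetric] by simp
  next
    case False
    then have Up: "U > 0" using U0 by simp
    then have Tp: "T > 0" using UT by simp
    define s where "s = T / U"
    have sp: "s > 0" unfolding s_def using Up Tp by simp
    have "\<And>k. 2 * (real k * v k) \<le> s * v k + (real k)^2 * v k / s"
    proof -
      fix k
      have "0 \<le> (s - real k)^2 * v k" using v0[of k] by simp
      then have "2 * s * (real k * v k) \<le> s * (s * v k) + (real k)^2 * v k"
        by (simp add: power2_eq_square algebra_simps)
      then show "2 * (real k * v k) \<le> s * v k + (real k)^2 * v k / s"
        using sp by (simp add: field_simps)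
    qed
    then have "(\<Sum>k. 2 * (real k * v k)) \<le> (\<Sum>k. s * v k + (real k)^2 * v k / s)"
      by (intro suminf_le summable_mult s1 summable_add summable_divide sv s2)
    also have "(\<Sum>k. 2 * (real k * v k)) = 2 * U" unfolding U_def by (rule suminf_mult[OF s1])
    also have "(\<Sum>k. s * v k + (real k)^2 * v k / s) = s * V + T / s"
    proof -
      have "(\<Sum>k. s * v k + (real k)^2 * v k / s) = (\<Sum>k. s * v k) + (\<Sum>k. (real k)^2 * v k / s)"
        by (rule suminf_add[symmetric]) (auto intro!: summable_mult sv summable_divide s2)
      also have "(\<Sum>k. s * v k) = s * V" unfolding V_def by (rule suminf_mult[OF sv])
      also have "(\<Sum>k. (real k)^2 * v k / s) = T / s" unfolding T_def by (rule suminf_divide[OF s2])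
      finally show ?thesis .
    qed
    finally have "2 * U \<le> s * V + T / s" .
    then have "2 * U \<le> T / U * V + U" unfolding s_def using Up Tp by simp
    then have "2 * U * U \<le> T * V + U * U" using Up by (simp add: field_simps)
    then have "U^2 \<le> V * T" by (simp add: power2_eq_square algebra_simps)
    then show ?thesis unfolding U_def V_def T_def .
  qed
qed

context ps begin

definition "EE w = bb powr alpha * w powr (alpha - 1) * exp (- bb * w)"
definition "FF w = (if w > 0 then EE w * PS w else 0)"
definition "FFd w = EE w * (((alpha - 1) / w - bb) * PS w + PS' w)"

lemma PS_meas[measurable]: "PS \<in> borel_measurable borel"
  using PS_cont by (rule borel_measurable_continuous_onI)

lemma PS'_meas[measurable]: "PS' \<in> borel_measurable borel"
  using PS'_cont by (rule borel_measurable_continuous_onI)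

lemma FF_meas[measurable]: "FF \<in> borel_measurable borel"
  unfolding FF_def[abs_def] EE_def by measurable

lemma EE_pos: "w > 0 \<Longrightarrow> EE w > 0"
  unfolding EE_def using bb by simp

lemma FF_pos: "w > 0 \<Longrightarrow> FF w > 0"
  unfolding FF_def using EE_pos PS_pos(1)[of w] PS_pos(2) by simp

lemma FF_nonneg: "FF w \<ge> 0"
  using FF_pos[of w] by (cases "w > 0") (auto simp: FF_def)

lemma EE_deriv: assumes w: "w > 0"
  shows "(EE has_real_derivative EE w * ((alpha - 1) / w - bb)) (at w)"
proof -
  have d1: "((\<lambda>w. w powr (alpha - 1)) has_real_derivative (alpha - 1) * w powr (alpha - 1 - 1)) (at w)"
    by (rule has_real_derivative_powr[OF w])
  have d2: "((\<lambda>w. exp (- bb * w)) has_real_derivative exp (- bb * w) * (- bb)) (at w)"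
    by (auto intro!: derivative_eq_intros)
  have "((\<lambda>w. bb powr alpha * (w powr (alpha - 1) * exp (- bb * w))) has_real_derivative bb powr alpha * ((alpha - 1) * w powr (alpha - 1 - 1) * exp (- bb * w) + exp (- bb * w) * (- bb) * w powr (alpha - 1))) (at w)"
    by (rule DERIV_cmult[OF DERIV_mult[OF d1 d2]])
  moreover have "(\<lambda>w. bb powr alpha * (w powr (alpha - 1) * exp (- bb * w))) = EE"
    unfolding EE_def[abs_def] by (simp add: mult.assoc)
  ultimately have d: "(EE has_real_derivative bb powr alpha * ((alpha - 1) * w powr (alpha - 1 - 1) * exp (- bb * w) + exp (- bb * w) * (- bb) * w powr (alpha - 1))) (at w)"
    by simp
  have p: "w powr (alpha - 1 - 1) = w powr (alpha - 1) / w" using w by (simp add: powr_diff power2_eq_square)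
  have eq: "bb powr alpha * ((alpha - 1) * w powr (alpha - 1 - 1) * exp (- bb * w) + exp (- bb * w) * (- bb) * w powr (alpha - 1)) = EE w * ((alpha - 1) / w - bb)"
    unfolding p EE_def using w by (simp add: field_simps)
  from d show ?thesis by (simp only: eq)
qed

lemma FF_deriv: assumes w: "w > 0" shows "(FF has_real_derivative FFd w) (at w)"
proof -
  have "((\<lambda>w. EE w * PS w) has_real_derivative EE w * ((alpha - 1) / w - bb) * PS w + PS' w * EE w) (at w)"
    by (rule DERIV_mult[OF EE_deriv[OF w] PS_deriv])
  then have "((\<lambda>w. EE w * PS w) has_real_derivative FFd w) (at w)"
    unfolding FFd_def by (simp add: algebra_simps)
  then show ?thesis
    by (rule has_field_derivative_transform_within_open[where S="{0<..}"]) (use w in \<open>auto simp: FF_def\<close>)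
qed

lemma FF_cont: "continuous_on {0<..} FF"
  using FF_deriv by (intro continuous_at_imp_continuous_on) (auto intro: DERIV_isCont)

lemma gd_term: assumes w: "w > 0"
  shows "pr k * gamma_dens (alpha + real k) bb w = EE w * (aa k * w^k)"
proof -
  have g: "Gamma (alpha + real k) > 0" using alpha by simp
  have e1: "bb powr (alpha + real k) = bb powr alpha * bb^k"
    using bb by (simp add: powr_add powr_realpow)
  have e2: "w powr (alpha + real k - 1) = w powr (alpha - 1) * w^k"
  proof -
    have "alpha + real k - 1 = (alpha - 1) + real k" by simp
    then show ?thesis using w by (simp only: powr_add powr_realpow)
  qed
  show ?thesis using w unfolding gamma_dens_def EE_def aa_def e1 e2
    using g by (simp add: field_simps add_pos_nonneg alpha)
qed

lemma FF_sums: assumes w: "w > 0"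
  shows "(\<lambda>k. pr k * gamma_dens (alpha + real k) bb w) sums FF w"
proof -
  have "(\<lambda>k. aa k * w^k) sums PS w" unfolding PS_def using summ_aa by (rule summable_sums)
  from sums_mult[OF this, of "EE w"] show ?thesis
    using w by (simp add: gd_term FF_def)
qed

lemma FF_zero: "w \<le> 0 \<Longrightarrow> pr k * gamma_dens (alpha + real k) bb w = 0"
  by (simp add: gamma_dens_def)

definition "TT k w = (real k)^2 * pr k * bb powr (alpha + real k) / Gamma (alpha + real k) *
   (indicator {0<..} w * w powr ((alpha + real k - 1) - 1) * exp (- bb * w))"

lemma TT_nonneg: "TT k w \<ge> 0"
  unfolding TT_def using pr0[of k] bb alpha by (auto intro!: mult_nonneg_nonneg divide_nonneg_pos add_pos_nonneg simp: indicator_def)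

lemma TT_term: assumes w: "w > 0"
  shows "TT k w = EE w / w * ((real k)^2 * (aa k * w^k))"
proof -
  have g: "Gamma (alpha + real k) > 0" using alpha by simp
  have e1: "bb powr (alpha + real k) = bb powr alpha * bb^k"
    using bb by (simp add: powr_add powr_realpow)
  have e2: "w powr ((alpha + real k - 1) - 1) = w powr (alpha - 1) * w^k / w"
  proof -
    have "(alpha + real k - 1) - 1 = ((alpha - 1) + real k) - 1" by simp
    then show ?thesis using w by (simp only: powr_add powr_realpow powr_diff powr_one)
  qed
  show ?thesis using w unfolding TT_def EE_def aa_def e1 e2
    using g by (simp add: field_simps)
qed

lemma FF_CS: assumes w: "w > 0"
  shows "FF w * (w * (PS' w / PS w)^2) \<le> (\<Sum>k. TT k w)"
proof -
  have Pp: "PS w > 0" using PS_pos(1)[of w] PS_pos(2) w by simp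
  have E: "EE w > 0" using EE_pos[OF w] .
  have v0: "\<And>k. aa k * w^k \<ge> 0" using aa_nonneg w by simp
  have CS: "(w * PS' w)^2 \<le> PS w * (\<Sum>k. (real k)^2 * (aa k * w^k))"
    unfolding wPS' PS_def
    by (rule series_CS[OF v0 summ_aa summ_aa2 summ_aa1]) (use w in simp)
  have "FF w * (w * (PS' w / PS w)^2) = EE w / w * ((w * PS' w)^2 / PS w)"
    using w Pp unfolding FF_def by (simp add: power2_eq_square field_simps)
  also have "\<dots> \<le> EE w / w * (\<Sum>k. (real k)^2 * (aa k * w^k))"
    using CS Pp E w by (intro mult_left_mono) (auto simp: field_simps)
  also have "\<dots> = (\<Sum>k. EE w / w * ((real k)^2 * (aa k * w^k)))"
    by (rule suminf_mult[OF summ_aa2, symmetric])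
  also have "\<dots> = (\<Sum>k. TT k w)" using w by (simp add: TT_term)
  finally show ?thesis .
qed

lemma TT_summable: "w > 0 \<Longrightarrow> summable (\<lambda>k. TT k w)"
  using summable_mult[OF summ_aa2, of "EE w / w" w] by (simp add: TT_term)

end

context ps begin

lemma TT_meas[measurable]: "TT k \<in> borel_measurable borel"
  unfolding TT_def[abs_def] by measurable

lemma TT_int: "(\<integral>\<^sup>+w. ennreal (TT k w) \<partial>lborel) = ennreal ((real k)^2 * pr k * bb / (alpha + real k - 1))"
proof (cases k)
  case 0
  then show ?thesis by (simp add: TT_def)
next
  case (Suc j)
  define C where "C = (real k)^2 * pr k * bb powr (alpha + real k) / Gamma (alpha + real k)"
  have ap: "alpha + real k - 1 > 0" using Suc alpha by simp
  have g: "Gamma (alpha + real k) > 0" "Gamma (alpha + real k - 1) > 0" using alpha ap by auto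
  have C0: "C \<ge> 0" unfolding C_def using pr0[of k] g bb by simp
  have "(\<integral>\<^sup>+w. ennreal (TT k w) \<partial>lborel) = (\<integral>\<^sup>+w. ennreal C * ennreal (indicator {0<..} w * w powr ((alpha + real k - 1) - 1) * exp (- bb * w)) \<partial>lborel)"
    unfolding TT_def C_def using C0
    by (intro nn_integral_cong) (simp add: ennreal_mult'[symmetric] C_def mult.assoc)
  also have "\<dots> = ennreal C * ennreal (Gamma (alpha + real k - 1) / bb powr (alpha + real k - 1))"
    using nn_int_powr_exp[OF ap bb] by (subst nn_integral_cmult) auto
  also have "\<dots> = ennreal (C * (Gamma (alpha + real k - 1) / bb powr (alpha + real k - 1)))"
    using C0 g bb by (subst ennreal_mult') auto
  also have "C * (Gamma (alpha + real k - 1) / bb powr (alpha + real k - 1)) = (real k)^2 * pr k * bb / (alpha + real k - 1)"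
  proof -
    have G: "Gamma (alpha + real k) = (alpha + real k - 1) * Gamma (alpha + real k - 1)"
      using Gamma_Suc_shift[OF alpha, of j] Suc by simp
    have B: "bb powr (alpha + real k) = bb * bb powr (alpha + real k - 1)"
      using bb by (simp add: powr_diff)
    have n1: "Gamma (alpha + real k - 1) \<noteq> 0" using g(2) by linarith
    have n2: "bb powr (alpha + real k - 1) \<noteq> 0" using bb by simp
    have n3: "alpha + real k - 1 \<noteq> 0" using ap by linarith
    have aux: "\<And>x G P d. G \<noteq> 0 \<Longrightarrow> P \<noteq> (0::real) \<Longrightarrow> d \<noteq> 0 \<Longrightarrow> x * (bb * P) / (d * G) * (G / P) = x * bb / d"
      by (simp add: field_simps)
    show ?thesis unfolding C_def G B using aux[OF n1 n2 n3, of "(real k)^2 * pr k"] by (simp add: mult.assoc)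
  qed
  finally show ?thesis .
qed

definition "Calpha = (if alpha \<ge> 1 then 1 else 1 / alpha)"

lemma Calpha_pos: "Calpha > 0" unfolding Calpha_def using alpha by auto

lemma coef_bound: "(real k)^2 * pr k * bb / (alpha + real k - 1) \<le> Calpha * bb * (real k * pr k)"
proof (cases k)
  case 0 then show ?thesis using Calpha_pos bb pr0 by simp
next
  case (Suc j)
  have ap: "alpha + real k - 1 > 0" using Suc alpha by simp
  have kk: "real k / (alpha + real k - 1) \<le> Calpha"
  proof (cases "alpha \<ge> 1")
    case True then show ?thesis using ap by (simp add: Calpha_def field_simps)
  next
    case False
    have "real k * alpha \<le> alpha + real k - 1"
    proof -
      have "(1 - alpha) * (real k - 1) \<ge> 0" using False Suc by simp
      then show ?thesis by (simp add: algebra_simps)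
    qed
    then show ?thesis using False ap alpha by (simp add: Calpha_def field_simps)
  qed
  have "(real k)^2 * pr k * bb / (alpha + real k - 1) = (real k / (alpha + real k - 1)) * (bb * (real k * pr k))"
    by (simp add: power2_eq_square field_simps)
  also have "\<dots> \<le> Calpha * (bb * (real k * pr k))"
    using kk pr0[of k] bb by (intro mult_right_mono) auto
  finally show ?thesis by (simp add: mult.assoc)
qed

lemma fisher_bound:
  "(\<integral>\<^sup>+w. ennreal (FF w) * ennreal (w * (PS' w / PS w)^2) \<partial>lborel) \<le> (\<Sum>k. ennreal (Calpha * bb * (real k * pr k)))"
proof -
  have "(\<integral>\<^sup>+w. ennreal (FF w) * ennreal (w * (PS' w / PS w)^2) \<partial>lborel) \<le> (\<integral>\<^sup>+w. (\<Sum>k. ennreal (TT k w)) \<partial>lborel)"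
  proof (intro nn_integral_mono)
    fix w :: real
    show "ennreal (FF w) * ennreal (w * (PS' w / PS w)^2) \<le> (\<Sum>k. ennreal (TT k w))"
    proof (cases "w > 0")
      case True
      have "ennreal (FF w) * ennreal (w * (PS' w / PS w)^2) = ennreal (FF w * (w * (PS' w / PS w)^2))"
        using FF_nonneg True by (simp add: ennreal_mult')
      also have "\<dots> \<le> ennreal (\<Sum>k. TT k w)" using FF_CS[OF True] by (rule ennreal_leI)
      also have "\<dots> = (\<Sum>k. ennreal (TT k w))"
        by (rule suminf_ennreal2[symmetric]) (auto simp: TT_nonneg TT_summable[OF True])
      finally show ?thesis .
    next
      case False then show ?thesis by (simp add: FF_def)
    qed
  qed
  also have "\<dots> = (\<Sum>k. \<integral>\<^sup>+w. ennreal (TT k w) \<partial>lborel)"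
    by (rule nn_integral_suminf) simp
  also have "\<dots> = (\<Sum>k. ennreal ((real k)^2 * pr k * bb / (alpha + real k - 1)))"
    by (simp add: TT_int)
  also have "\<dots> \<le> (\<Sum>k. ennreal (Calpha * bb * (real k * pr k)))"
    by (intro suminf_le summableI ennreal_leI coef_bound)
  finally show ?thesis .
qed

end

lemma cont_ae_eq:
  fixes f g :: "real \<Rightarrow> real"
  assumes U: "open U" and cf: "continuous_on U f" and cg: "continuous_on U g"
    and ae: "AE y in lborel. f y = g y" and x: "x \<in> U"
  shows "f x = g x"
proof (rule ccontr)
  assume ne: "f x \<noteq> g x"
  define S where "S = (\<lambda>y. f y - g y) -` (-{0}) \<inter> U"
  have cont: "continuous_on U (\<lambda>y. f y - g y)" by (intro continuous_intros cf cg)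
  have o: "open (-{0::real})" by auto
  have "open S" unfolding S_def using continuous_on_open_vimage[OF U] cont o by blast
  moreover have "x \<in> S" unfolding S_def using ne x by simp
  ultimately obtain e where e: "e > 0" "ball x e \<subseteq> S" by (meson open_contains_ball)
  from ae obtain N where N: "{y \<in> space lborel. \<not> f y = g y} \<subseteq> N" "emeasure lborel N = 0" "N \<in> sets lborel"
    by (rule AE_E)
  have "ball x e \<subseteq> N"
  proof
    fix y assume "y \<in> ball x e"
    then have "y \<in> S" using e(2) by auto
    then have "f y \<noteq> g y" unfolding S_def by auto
    then show "y \<in> N" using N(1) by auto
  qed
  then have "emeasure lborel (ball x e) \<le> emeasure lborel N" using N(3) by (rule emeasure_mono)
  moreover have "emeasure lborel (ball x e) = ennreal (2 * e)"
    unfolding ball_eq_greaterThanLessThan using e by simp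
  ultimately show False using N(2) e by simp
qed

context sp begin

definition "prr mu k = enn2real (PP mu k)"

lemma qq_le1: "y \<ge> 0 \<Longrightarrow> qq k y \<le> 1"
proof -
  assume y: "y \<ge> 0"
  have s: "(\<lambda>k. (cc*y)^k / fact k * exp (-(cc*y))) sums 1" using y cc_pos by (intro poisson_sums) simp
  have "(\<Sum>j\<in>{k}. (cc*y)^j / fact j * exp (-(cc*y))) \<le> (\<Sum>j. (cc*y)^j / fact j * exp (-(cc*y)))"
    by (rule sum_le_suminf[OF sums_summable[OF s]]) (use y cc_pos in auto)
  then show ?thesis using sums_unique[OF s] by (simp add: qq_def)
qed

lemma qq_nonneg: "y \<ge> 0 \<Longrightarrow> qq k y \<ge> 0"
  unfolding qq_def using cc_pos by simp

lemma PP_props: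
  assumes pmu: "prob_space mu" and smu: "sets mu = sets borel"
  shows "PP mu k = ennreal (prr mu k)" "0 \<le> prr mu k" "prr mu k \<le> 1" "prr mu 0 > 0"
proof -
  interpret mu: prob_space mu by (fact pmu)
  have meas: "(\<lambda>x. ennreal (qq k (max x 0))) \<in> borel_measurable mu" for k
    by (subst measurable_cong_sets[OF smu refl]) measurable
  have le: "PP mu k \<le> 1" for k
  proof -
    have "PP mu k \<le> (\<integral>\<^sup>+x. 1 \<partial>mu)"
      unfolding PP_def by (intro nn_integral_mono) (simp add: qq_le1)
    then show ?thesis by (simp add: mu.emeasure_space_1)
  qed
  then have fin: "PP mu k \<noteq> \<top>" for k by (metis ennreal_one_neq_top neq_top_trans)
  show e: "PP mu k = ennreal (prr mu k)" for k unfolding prr_def using ennreal_enn2real[of "PP mu k"] fin[of k] by (simp add: top.not_eq_extremum)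
  show "0 \<le> prr mu k" unfolding prr_def by simp
  show "prr mu k \<le> 1" using le[of k] e[of k] by simp
  have "PP mu 0 \<noteq> 0"
  proof
    assume "PP mu 0 = 0"
    then have ae: "AE x in mu. ennreal (qq 0 (max x 0)) = 0"
      unfolding PP_def using nn_integral_0_iff_AE[OF meas] by simp
    have qp: "qq 0 y > 0" for y by (simp add: qq_def)
    from ae have "AE x in mu. False"
    proof eventually_elim
      fix x assume "ennreal (qq 0 (max x 0)) = 0"
      then have "qq 0 (max x 0) \<le> 0" by (simp only: ennreal_eq_0_iff)
      with qp[of "max x 0"] show False by simp
    qed
    then show False by simp
  qed
  then have a: "0 < PP mu 0" by (simp add: zero_less_iff_neq_zero)
  have b: "PP mu 0 < top" using fin[of 0] by (simp add: less_top)
  show "prr mu 0 > 0" unfolding prr_def enn2real_positive_iff using a b by simp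
qed

lemma PP_mean:
  assumes pmu: "prob_space mu" and smu: "sets mu = sets borel"
  shows "(\<Sum>k. ennreal (real k * prr mu k)) = (\<integral>\<^sup>+x. ennreal (cc * max x 0) \<partial>mu)"
proof -
  have meas: "(\<lambda>x. ennreal (real k * qq k (max x 0))) \<in> borel_measurable mu" for k
    by (subst measurable_cong_sets[OF smu refl]) measurable
  have "(\<Sum>k. ennreal (real k * prr mu k)) = (\<Sum>k. (\<integral>\<^sup>+x. ennreal (real k * qq k (max x 0)) \<partial>mu))"
  proof (intro suminf_cong)
    fix k
    have m2: "(\<lambda>x. ennreal (qq k (max x 0))) \<in> borel_measurable mu"
      by (subst measurable_cong_sets[OF smu refl]) measurable
    have "ennreal (real k * prr mu k) = ennreal (real k) * PP mu k"
      using PP_props[OF pmu smu] by (simp add: ennreal_mult)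
    also have "\<dots> = (\<integral>\<^sup>+x. ennreal (real k) * ennreal (qq k (max x 0)) \<partial>mu)"
      unfolding PP_def by (rule nn_integral_cmult[OF m2, symmetric])
    also have "\<dots> = (\<integral>\<^sup>+x. ennreal (real k * qq k (max x 0)) \<partial>mu)"
      by (intro nn_integral_cong) (simp add: ennreal_mult')
    finally show "ennreal (real k * prr mu k) = (\<integral>\<^sup>+x. ennreal (real k * qq k (max x 0)) \<partial>mu)" .
  qed
  also have "\<dots> = (\<integral>\<^sup>+x. (\<Sum>k. ennreal (real k * qq k (max x 0))) \<partial>mu)"
    by (rule nn_integral_suminf[symmetric]) (rule meas)
  also have "\<dots> = (\<integral>\<^sup>+x. ennreal (cc * max x 0) \<partial>mu)"
  proof (intro nn_integral_cong)
    fix x :: real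
    show "(\<Sum>k. ennreal (real k * qq k (max x 0))) = ennreal (cc * max x 0)"
      unfolding qq_def using poisson_mean_sums[of "cc * max x 0"] cc_pos
      by (intro suminf_ennreal_eq) (auto simp: mult_nonneg_nonneg)
  qed
  finally show ?thesis .
qed

end

context sp begin

lemma sp_main:
  assumes pmu: "prob_space mu" and smu: "sets mu = sets borel" and pos: "AE x in mu. x > 0"
    and mean: "(\<integral>\<^sup>+x. ennreal (cc * max x 0) \<partial>mu) = ennreal m"
  shows "\<exists>f. is_diff_pos_density (smart_path_law alpha lam mu tau) f"
    and "\<And>f. is_diff_pos_density (smart_path_law alpha lam mu tau) f \<Longrightarrow>
           loc_fisher alpha lam tau (smart_path_law alpha lam mu tau) f
             \<le> ennreal ((if alpha \<ge> 1 then 1 else 1 / alpha) * bb * m)"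
proof -
  note PPp = PP_props[OF pmu smu]
  interpret P: ps alpha bb "prr mu"
    by unfold_locales (use alpha bb_pos PPp in auto)
  have DD_eq: "DD mu w = ennreal (P.FF w)" for w
  proof (cases "w > 0")
    case True
    have "DD mu w = (\<Sum>k. ennreal (prr mu k * gamma_dens (alpha + real k) bb w))"
      unfolding DD_def using PPp(1)
      by (intro suminf_cong) (simp add: ennreal_mult' PPp(2))
    also have "\<dots> = ennreal (P.FF w)"
      by (rule suminf_ennreal_eq[OF _ P.FF_sums[OF True]])
         (use PPp(2) gd_nonneg alpha bb_pos in \<open>auto intro!: mult_nonneg_nonneg add_pos_nonneg\<close>)
    finally show ?thesis .
  next
    case False
    then show ?thesis unfolding DD_def P.FF_def by (simp add: gamma_dens_def)
  qed
  have nu: "smart_path_law alpha lam mu tau = density lborel (\<lambda>w. ennreal (P.FF w))"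
    unfolding smart_density[OF pmu smu pos] DD_eq ..
  show "\<exists>f. is_diff_pos_density (smart_path_law alpha lam mu tau) f"
  proof (intro exI[of _ P.FF])
    show "is_diff_pos_density (smart_path_law alpha lam mu tau) P.FF"
      unfolding is_diff_pos_density_def nu
      using P.FF_nonneg P.FF_pos P.FF_deriv
      by (auto simp: real_differentiable_def)
  qed
  fix f assume f: "is_diff_pos_density (smart_path_law alpha lam mu tau) f"
  then have fm: "f \<in> borel_measurable borel" and f0: "\<And>w. 0 \<le> f w"
    and fd: "smart_path_law alpha lam mu tau = density lborel (\<lambda>w. ennreal (f w))"
    and fp: "\<And>w. w > 0 \<Longrightarrow> 0 < f w \<and> f differentiable (at w)"
    unfolding is_diff_pos_density_def by auto
  have "density lborel (\<lambda>w. ennreal (f w)) = density lborel (\<lambda>w. ennreal (P.FF w))"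
    using fd nu by simp
  then have "AE w in lborel. ennreal (f w) = ennreal (P.FF w)"
    using sigma_finite_measure.density_unique_iff[OF lborel.sigma_finite_measure_axioms, of "\<lambda>w. ennreal (f w)" "\<lambda>w. ennreal (P.FF w)"] fm by simp
  then have ae: "AE w in lborel. f w = P.FF w"
    by eventually_elim (use f0 P.FF_nonneg in simp)
  have fc: "continuous_on {0<..} f"
    using fp by (intro continuous_at_imp_continuous_on) (auto intro: differentiable_imp_continuous_within)
  have feq: "\<And>w. w > 0 \<Longrightarrow> f w = P.FF w"
    using cont_ae_eq[OF _ fc P.FF_cont ae] by simp
  have fder: "\<And>w. w > 0 \<Longrightarrow> deriv f w = P.FFd w"
  proof -
    fix w :: real assume w: "w > 0"
    have "(f has_real_derivative P.FFd w) (at w)"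
      by (rule has_field_derivative_transform_within_open[OF P.FF_deriv[OF w], where S="{0<..}"])
         (use w feq in auto)
    then show "deriv f w = P.FFd w" by (rule DERIV_imp_deriv)
  qed
  have key: "\<And>w. w > 0 \<Longrightarrow> deriv f w / f w - (alpha - 1) / w + lam / (1 - tau) = P.PS' w / P.PS w"
  proof -
    fix w :: real assume w: "w > 0"
    have E: "P.EE w \<noteq> 0" using P.EE_pos[OF w] by simp
    have S: "P.PS w \<noteq> 0" using P.PS_pos(1)[of w] P.PS_pos(2) w by simp
    have "deriv f w / f w = ((alpha - 1) / w - bb) + P.PS' w / P.PS w"
      unfolding fder[OF w] feq[OF w] P.FFd_def P.FF_def using w E S by (simp add: field_simps)
    then show "deriv f w / f w - (alpha - 1) / w + lam / (1 - tau) = P.PS' w / P.PS w"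
      by (simp add: bb_def)
  qed
  have "loc_fisher alpha lam tau (smart_path_law alpha lam mu tau) f
      = (\<integral>\<^sup>+w. ennreal (w * (P.PS' w / P.PS w)^2) \<partial>density lborel (\<lambda>w. ennreal (P.FF w)))"
    unfolding loc_fisher_def nu
  proof (rule nn_integral_cong_AE)
    have m: "(\<lambda>w. ennreal (P.FF w)) \<in> borel_measurable lborel" using P.FF_meas by simp
    have "AE w in density lborel (\<lambda>w. ennreal (P.FF w)). w > 0"
      unfolding AE_density[OF m] by (auto simp: P.FF_def)
    then show "AE w in density lborel (\<lambda>w. ennreal (P.FF w)). ennreal (w * (deriv f w / f w - (alpha - 1) / w + lam / (1 - tau))\<^sup>2) = ennreal (w * (P.PS' w / P.PS w)\<^sup>2)"
      by eventually_elim (simp add: key)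
  qed
  also have "\<dots> = (\<integral>\<^sup>+w. ennreal (P.FF w) * ennreal (w * (P.PS' w / P.PS w)^2) \<partial>lborel)"
    by (subst nn_integral_density) auto
  also have "\<dots> \<le> (\<Sum>k. ennreal (P.Calpha * bb * (real k * prr mu k)))"
    by (rule P.fisher_bound)
  also have "\<dots> = ennreal (P.Calpha * bb) * (\<Sum>k. ennreal (real k * prr mu k))"
    using P.Calpha_pos bb_pos
    by (subst ennreal_suminf_cmult[symmetric]) (auto intro!: suminf_cong simp: ennreal_mult' mult.assoc)
  also have "\<dots> = ennreal (P.Calpha * bb) * ennreal m"
    using PP_mean[OF pmu smu] mean by simp
  also have "\<dots> \<le> ennreal ((if alpha \<ge> 1 then 1 else 1 / alpha) * bb * m)"
    using P.Calpha_pos bb_pos by (simp add: P.Calpha_def ennreal_mult'[symmetric] ennreal_mult''[symmetric])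
  finally show "loc_fisher alpha lam tau (smart_path_law alpha lam mu tau) f \<le> ennreal ((if alpha \<ge> 1 then 1 else 1 / alpha) * bb * m)" .
qed

end

theorem proposition3p1:
  fixes M :: "'a measure" and X :: "'a \<Rightarrow> real" and alpha lam :: real
  assumes "prob_space M"
    and "X \<in> borel_measurable M"
    and "AE \<omega> in M. X \<omega> > 0"
    and "integrable M X"
    and "alpha > 0" and "lam > 0"
  shows "(\<forall>tau \<in> {0<..<1}.
           (\<exists>f. is_diff_pos_density (smart_path_law alpha lam (distr M borel X) tau) f) \<and>
           (\<forall>f. is_diff_pos_density (smart_path_law alpha lam (distr M borel X) tau) f \<longrightarrow>
                loc_fisher alpha lam tau (smart_path_law alpha lam (distr M borel X) tau) f < \<infinity>))
       \<and> ((\<integral>\<omega>. X \<omega> \<partial>M) = alpha / lam \<longrightarrow>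
         (\<forall>tau \<in> {0<..<1}. \<forall>f. is_diff_pos_density (smart_path_law alpha lam (distr M borel X) tau) f \<longrightarrow>
           (alpha \<ge> 1 \<longrightarrow>
              loc_fisher alpha lam tau (smart_path_law alpha lam (distr M borel X) tau) f
                \<le> ennreal (alpha * lam * tau / (1 - tau)\<^sup>2)) \<and>
           (alpha < 1 \<longrightarrow>
              loc_fisher alpha lam tau (smart_path_law alpha lam (distr M borel X) tau) f
                \<le> ennreal ((1 + 1 / alpha) * (alpha * lam * tau / (1 - tau)\<^sup>2)))))"
proof -
  interpret M: prob_space M by fact
  define mu where "mu = distr M borel X"
  define EXX where "EXX = (\<integral>\<omega>. X \<omega> \<partial>M)"
  have Xm[measurable]: "X \<in> borel_measurable M" by fact
  have pmu: "prob_space mu" unfolding mu_def by (rule M.prob_space_distr) (rule assms(2))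
  have smu: "sets mu = sets borel" unfolding mu_def by simp
  have pos: "AE x in mu. x > 0" unfolding mu_def using assms(3) by (subst AE_distr_iff) auto
  have EXX0: "EXX \<ge> 0" unfolding EXX_def using assms(3)
    by (intro integral_nonneg_AE) (auto elim: eventually_mono)
  have mean: "(\<integral>\<^sup>+x. ennreal (c * max x 0) \<partial>mu) = ennreal (c * EXX)" if c: "c \<ge> 0" for c
  proof -
    have "(\<integral>\<^sup>+x. ennreal (c * max x 0) \<partial>mu) = (\<integral>\<^sup>+\<omega>. ennreal (c * max (X \<omega>) 0) \<partial>M)"
      unfolding mu_def by (subst nn_integral_distr) auto
    also have "\<dots> = (\<integral>\<^sup>+\<omega>. ennreal (c * X \<omega>) \<partial>M)"
      using assms(3) by (intro nn_integral_cong_AE) (auto elim: eventually_mono)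
    also have "\<dots> = ennreal (\<integral>\<omega>. c * X \<omega> \<partial>M)"
      by (rule nn_integral_eq_integral) (use assms(3,4) c in \<open>auto elim: eventually_mono\<close>)
    also have "(\<integral>\<omega>. c * X \<omega> \<partial>M) = c * EXX" unfolding EXX_def by simp
    finally show ?thesis .
  qed
  have part: "(\<exists>f. is_diff_pos_density (smart_path_law alpha lam mu tau) f) \<and>
      (\<forall>f. is_diff_pos_density (smart_path_law alpha lam mu tau) f \<longrightarrow>
        loc_fisher alpha lam tau (smart_path_law alpha lam mu tau) f
          \<le> ennreal ((if alpha \<ge> 1 then 1 else 1 / alpha) * (lam / (1 - tau)) * (lam * tau / (1 - tau) * EXX)))"
    if tau: "tau \<in> {0<..<1}" for tau
  proof -
    interpret S: sp alpha lam tau using tau assms(5,6) by unfold_locales auto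
    have m: "(\<integral>\<^sup>+x. ennreal (S.cc * max x 0) \<partial>mu) = ennreal (S.cc * EXX)"
      using mean S.cc_pos by simp
    show ?thesis using S.sp_main[OF pmu smu pos m] unfolding S.bb_def S.cc_def by blast
  qed
  have bndG: "loc_fisher alpha lam tau (smart_path_law alpha lam (distr M borel X) tau) f
          \<le> ennreal ((if alpha \<ge> 1 then 1 else 1 / alpha) * (alpha * lam * tau / (1 - tau)\<^sup>2))"
    if E: "(\<integral>\<omega>. X \<omega> \<partial>M) = alpha / lam" and tau: "tau \<in> {0<..<1}"
      and f: "is_diff_pos_density (smart_path_law alpha lam (distr M borel X) tau) f" for tau f
  proof -
    have t: "0 < tau" "tau < 1" using tau by auto
    from part[OF tau] f
    have bnd: "loc_fisher alpha lam tau (smart_path_law alpha lam (distr M borel X) tau) f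
          \<le> ennreal ((if alpha \<ge> 1 then 1 else 1 / alpha) * (lam / (1 - tau)) * (lam * tau / (1 - tau) * EXX))"
      unfolding mu_def by blast
    have val: "(lam / (1 - tau)) * (lam * tau / (1 - tau) * EXX) = alpha * lam * tau / (1 - tau)\<^sup>2"
      using E assms(6) t unfolding EXX_def by (simp add: field_simps power2_eq_square)
    show ?thesis
      using bnd unfolding mult.assoc[of "if alpha \<ge> 1 then 1 else 1 / alpha"] val .
  qed
  show ?thesis
  proof (intro conjI ballI allI impI)
    fix tau :: real assume "tau \<in> {0<..<1}"
    from part[OF this] show "\<exists>f. is_diff_pos_density (smart_path_law alpha lam (distr M borel X) tau) f"
      unfolding mu_def by blast
  next
    fix tau :: real and f assume tau: "tau \<in> {0<..<1}"
      and f: "is_diff_pos_density (smart_path_law alpha lam (distr M borel X) tau) f"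
    from part[OF tau] f
    have "loc_fisher alpha lam tau (smart_path_law alpha lam (distr M borel X) tau) f
          \<le> ennreal ((if alpha \<ge> 1 then 1 else 1 / alpha) * (lam / (1 - tau)) * (lam * tau / (1 - tau) * EXX))"
      unfolding mu_def by blast
    also have "\<dots> < \<infinity>" by simp
    finally show "loc_fisher alpha lam tau (smart_path_law alpha lam (distr M borel X) tau) f < \<infinity>" .
  next
    fix tau :: real and f assume E: "(\<integral>\<omega>. X \<omega> \<partial>M) = alpha / lam" and tau: "tau \<in> {0<..<1}"
      and f: "is_diff_pos_density (smart_path_law alpha lam (distr M borel X) tau) f" and a1: "alpha \<ge> 1"
    from bndG[OF E tau f] show "loc_fisher alpha lam tau (smart_path_law alpha lam (distr M borel X) tau) f \<le> ennreal (alpha * lam * tau / (1 - tau)\<^sup>2)"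
      by (simp only: if_P[OF a1] mult_1_left)
  next
    fix tau :: real and f assume E: "(\<integral>\<omega>. X \<omega> \<partial>M) = alpha / lam" and tau: "tau \<in> {0<..<1}"
      and f: "is_diff_pos_density (smart_path_law alpha lam (distr M borel X) tau) f" and a1: "alpha < 1"
    have t: "0 < tau" "tau < 1" using tau by auto
    have v0: "alpha * lam * tau / (1 - tau)\<^sup>2 \<ge> 0" using assms(5,6) t by simp
    have "(1 / alpha) * (alpha * lam * tau / (1 - tau)\<^sup>2) \<le> (1 + 1 / alpha) * (alpha * lam * tau / (1 - tau)\<^sup>2)"
      using v0 by (intro mult_right_mono) auto
    then have "ennreal ((if alpha \<ge> 1 then 1 else 1 / alpha) * (alpha * lam * tau / (1 - tau)\<^sup>2))
          \<le> ennreal ((1 + 1 / alpha) * (alpha * lam * tau / (1 - tau)\<^sup>2))"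
      using a1 by (intro ennreal_leI) simp
    with bndG[OF E tau f] show "loc_fisher alpha lam tau (smart_path_law alpha lam (distr M borel X) tau) f
                \<le> ennreal ((1 + 1 / alpha) * (alpha * lam * tau / (1 - tau)\<^sup>2))" by (rule order.trans)
  qed
qed

end
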